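(* Let $(N,M,W,C,P,\infty)$ be an MRS-situation with unbounded production and $(N,M,v)$ the corresponding MRS-game. Then the set $M^o$ of optimal suppliers satisfies $|M^o|\ge 1$.
   Context: An MRS-situation $(N,M,W,C,P,\overline{Q})$ consists of a finite set $N$ of retailers and a finite set $M$ of suppliers (distinct agents), and: for each $j\in M$ a unit production cost $c_j:[0,\infty)\to(0,\infty)$, decreasing and continuous with $c_j(q)q$ nondecreasing, and a wholesale price $w_j:[0,\infty)\to(0,\infty)$, nonincreasing and continuous, with $w_j(q)>c_j(q)$ for all $q\ge0$ and $w_j(q)q$ nondecreasing; for each $i\in N$ a selling price $p_i:[0,\infty)\to\mathbb{R}$, nonincreasing and continuous, with $p_i(0)>w_j(0)$ for all $j$, and $q_i^*>0$ with $p_i(q_i^* )=0$; and capacities $\overline{q}_{ij}\in(0,\infty)$. The situation has unbounded production, written $(N,M,W,C,P,\infty)$, if $\overline{q}_{ij}=K$ for all $i,j$ with $K$ large enough that the capacities do not affect optimal solutions (e.g. $K\ge\max_{i\in N}q_i^*$, so capacity constraints are implied by $q_{iM}\le q_i^*$). For an order matrix $q=(q_{ij})_{i\in R,j\in M}\ge0$: $q_{Rj}=\sum_{i\in R}q_{ij}$, $q_{iM}=\sum_{j}q_{ij}$, $q_{RS}=\sum_{j\in S}\sum_{i\in R}q_{ij}$, $q_i=(q_{ij})_j$, $q_R=(q_{Rj})_j$; $c_S(x)=\min_{j\in S}c_j(x)$. For $i\in R$: $\Pi_i(q_i,\Psi^S(q_R))=p_i(q_{iM})q_{iM}-\sum_{j\in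 S}c_S(q_{RS})q_{ij}-\sum_{j\in M\setminus S}w_j(q_{Rj})q_{ij}$. $\mathbb{Q}^R=\{q\in\mathbb{R}_+^{R\times M}: q_{iM}\le q_i^*,\ q_{ij}\le\overline{q}_{ij}\}$; $q^{(R,S)}$ is an optimal solution of $\max\{\sum_{i\in R}\Pi_i(q_i,\Psi^S(q_R)):q\in\mathbb{Q}^R\}$. MRS-game: $v(R,S)=\sum_{i\in R}\Pi_i(q_i^{(R,S)},\Psi^S(q_R^{(R,S)}))$ for $\emptyset\ne R\subseteq N$, $S\subseteq M$, $v(\emptyset,S)=0$. A supplier $j\in M$ is optimal if $v(N,M)=v(N,\{j\})$; $M^o$ is the set of optimal suppliers. *)

theory Defs
  imports Complex_Main
begin

text \<open>Retailers have type 'n, suppliers type 'm (so they are distinct agents).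
  c j = unit production cost of supplier j, w j = wholesale price of j,
  p i = selling price of retailer i, qs i = q_i^*, qbar i j = capacity.\<close>

definition mrs_situation ::
  "'n set \<Rightarrow> 'm set \<Rightarrow> ('m \<Rightarrow> real \<Rightarrow> real) \<Rightarrow> ('m \<Rightarrow> real \<Rightarrow> real) \<Rightarrow>
   ('n \<Rightarrow> real \<Rightarrow> real) \<Rightarrow> ('n \<Rightarrow> real) \<Rightarrow> ('n \<Rightarrow> 'm \<Rightarrow> real) \<Rightarrow> bool" where
  "mrs_situation N M c w p qs qbar \<longleftrightarrow>
     finite N \<and> finite M \<and>
     (\<forall>j\<in>M.
        (\<forall>x\<ge>0. c j x > 0) \<and>
        (\<forall>x y. 0 \<le> x \<longrightarrow> x < y \<longrightarrow> c j y < c j x) \<and>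
        continuous_on {0..} (c j) \<and>
        (\<forall>x y. 0 \<le> x \<longrightarrow> x \<le> y \<longrightarrow> c j x * x \<le> c j y * y) \<and>
        (\<forall>x\<ge>0. w j x > 0) \<and>
        (\<forall>x y. 0 \<le> x \<longrightarrow> x \<le> y \<longrightarrow> w j y \<le> w j x) \<and>
        continuous_on {0..} (w j) \<and>
        (\<forall>x\<ge>0. w j x > c j x) \<and>
        (\<forall>x y. 0 \<le> x \<longrightarrow> x \<le> y \<longrightarrow> w j x * x \<le> w j y * y)) \<and>
     (\<forall>i\<in>N.
        (\<forall>x y. 0 \<le> x \<longrightarrow> x \<le> y \<longrightarrow> p i y \<le> p i x) \<and>
        continuous_on {0..} (p i) \<and>
        (\<forall>j\<in>M. p i 0 > w j 0) \<and>
        qs i > 0 \<and> p i (qs i) = 0) \<and>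
     (\<forall>i\<in>N. \<forall>j\<in>M. qbar i j > 0)"

definition unbounded_production :: "'n set \<Rightarrow> 'm set \<Rightarrow> ('n \<Rightarrow> real) \<Rightarrow> ('n \<Rightarrow> 'm \<Rightarrow> real) \<Rightarrow> bool" where
  "unbounded_production N M qs qbar \<longleftrightarrow>
     (\<exists>K. (\<forall>i\<in>N. \<forall>j\<in>M. qbar i j = K) \<and> (\<forall>i\<in>N. qs i \<le> K))"

definition cS :: "('m \<Rightarrow> real \<Rightarrow> real) \<Rightarrow> 'm set \<Rightarrow> real \<Rightarrow> real" where
  "cS c S x = Min ((\<lambda>j. c j x) ` S)"

definition orders :: "'n set \<Rightarrow> 'm set \<Rightarrow> ('n \<Rightarrow> real) \<Rightarrow> ('n \<Rightarrow> 'm \<Rightarrow> real) \<Rightarrow> ('n \<Rightarrow> 'm \<Rightarrow> real) set" where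
  "orders R M qs qbar = {q. (\<forall>i j. (i \<notin> R \<or> j \<notin> M) \<longrightarrow> q i j = 0) \<and>
       (\<forall>i\<in>R. \<forall>j\<in>M. 0 \<le> q i j \<and> q i j \<le> qbar i j) \<and>
       (\<forall>i\<in>R. (\<Sum>j\<in>M. q i j) \<le> qs i)}"

definition profit ::
  "'n set \<Rightarrow> 'm set \<Rightarrow> 'm set \<Rightarrow> ('m \<Rightarrow> real \<Rightarrow> real) \<Rightarrow> ('m \<Rightarrow> real \<Rightarrow> real) \<Rightarrow>
   ('n \<Rightarrow> real \<Rightarrow> real) \<Rightarrow> ('n \<Rightarrow> 'm \<Rightarrow> real) \<Rightarrow> 'n \<Rightarrow> real" where
  "profit R M S c w p q i =
     (let qiM = (\<Sum>j\<in>M. q i j);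
          qRS = (\<Sum>j\<in>S. \<Sum>k\<in>R. q k j)
      in p i qiM * qiM
         - (\<Sum>j\<in>S. cS c S qRS * q i j)
         - (\<Sum>j\<in>M - S. w j (\<Sum>k\<in>R. q k j) * q i j))"

definition mrs_game ::
  "'m set \<Rightarrow> ('m \<Rightarrow> real \<Rightarrow> real) \<Rightarrow> ('m \<Rightarrow> real \<Rightarrow> real) \<Rightarrow>
   ('n \<Rightarrow> real \<Rightarrow> real) \<Rightarrow> ('n \<Rightarrow> real) \<Rightarrow> ('n \<Rightarrow> 'm \<Rightarrow> real) \<Rightarrow> 'n set \<Rightarrow> 'm set \<Rightarrow> real" where
  "mrs_game M c w p qs qbar R S =
     (if R = {} then 0
      else (SUP q\<in>orders R M qs qbar. \<Sum>i\<in>R. profit R M S c w p q i))"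

definition optimal_suppliers ::
  "'n set \<Rightarrow> 'm set \<Rightarrow> ('m \<Rightarrow> real \<Rightarrow> real) \<Rightarrow> ('m \<Rightarrow> real \<Rightarrow> real) \<Rightarrow>
   ('n \<Rightarrow> real \<Rightarrow> real) \<Rightarrow> ('n \<Rightarrow> real) \<Rightarrow> ('n \<Rightarrow> 'm \<Rightarrow> real) \<Rightarrow> 'm set" where
  "optimal_suppliers N M c w p qs qbar =
     {j\<in>M. mrs_game M c w p qs qbar N M = mrs_game M c w p qs qbar N {j}}"

end

theory Submission
  imports Defs
begin

lemma cS_le: "finite S \<Longrightarrow> k \<in> S \<Longrightarrow> cS c S x \<le> c k x"
  unfolding cS_def by (rule Min_le) auto

lemma cS_in: assumes "finite S" "S \<noteq> {}" shows "\<exists>k\<in>S. cS c S x = c k x"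
proof -
  have "Min ((\<lambda>j. c j x) ` S) \<in> (\<lambda>j. c j x) ` S" using assms by (intro Min_in) auto
  thus ?thesis unfolding cS_def by auto
qed

lemma cS_single: "cS c {j} x = c j x"
  unfolding cS_def by simp

lemma F_single:
  assumes "finite N" "finite M" "j \<in> M"
  shows "(\<Sum>i\<in>N. profit N M {j} c w p q i) =
     (\<Sum>i\<in>N. p i (\<Sum>k\<in>M. q i k) * (\<Sum>k\<in>M. q i k))
     - (\<Sum>i\<in>N. c j (\<Sum>l\<in>N. q l j) * q i j)
     - (\<Sum>i\<in>N. \<Sum>k\<in>M-{j}. w k (\<Sum>l\<in>N. q l k) * q i k)"
  unfolding profit_def Let_def cS_single by (simp add: sum_subtractf)

lemma F_all:
  assumes "finite N" "finite M"
  shows "(\<Sum>i\<in>N. profit N M M c w p q i) =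
     (\<Sum>i\<in>N. p i (\<Sum>k\<in>M. q i k) * (\<Sum>k\<in>M. q i k))
     - (\<Sum>i\<in>N. \<Sum>k\<in>M. cS c M (\<Sum>k\<in>M. \<Sum>l\<in>N. q l k) * q i k)"
  unfolding profit_def Let_def by (simp add: sum_subtractf)

lemma sum_nonneg_le:
  fixes f :: "'a \<Rightarrow> real"
  assumes "finite A" "k \<in> A" "\<forall>x\<in>A. f x \<ge> 0"
  shows "f k \<le> sum f A"
  using assms by (intro member_le_sum) auto

lemma bounded_F:
  assumes sit: "mrs_situation N M c w p qs qbar" and Mne: "M \<noteq> {}"
    and S: "S \<subseteq> M" "S \<noteq> {}" and q: "q \<in> orders N M qs qbar"
  shows "(\<Sum>i\<in>N. profit N M S c w p q i) \<le> (\<Sum>i\<in>N. p i 0 * qs i)"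
proof (rule sum_mono)
  fix i assume i: "i \<in> N"
  have fin: "finite N" "finite M" using sit unfolding mrs_situation_def by auto
  have finS: "finite S" using S fin finite_subset by blast
  have qnn: "\<forall>l\<in>N. \<forall>k\<in>M. 0 \<le> q l k" and qle: "(\<Sum>k\<in>M. q i k) \<le> qs i"
    using q i unfolding orders_def by auto
  define x where "x = (\<Sum>k\<in>M. q i k)"
  have x0: "0 \<le> x" unfolding x_def using qnn i by (simp add: sum_nonneg)
  from Mne obtain j where j: "j \<in> M" by auto
  have pmono: "p i x \<le> p i 0" and p0: "p i 0 > w j 0" and wpos: "w j 0 > 0"
    using sit i j x0 unfolding mrs_situation_def by auto
  have "p i x * x \<le> p i 0 * x" using pmono x0 by (simp add: mult_right_mono)
  also have "\<dots> \<le> p i 0 * qs i" using p0 wpos qle x_def by (intro mult_left_mono) auto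
  finally have rev: "p i x * x \<le> p i 0 * qs i" .
  define X where "X = (\<Sum>k\<in>S. \<Sum>l\<in>N. q l k)"
  have X0: "0 \<le> X" unfolding X_def using qnn S by (intro sum_nonneg) auto
  have cpos: "cS c S X > 0"
  proof -
    obtain k where k: "k \<in> S" "cS c S X = c k X" using cS_in[OF finS S(2)] by blast
    thus ?thesis using sit S X0 unfolding mrs_situation_def by auto
  qed
  have c1: "(\<Sum>k\<in>S. cS c S X * q i k) \<ge> 0"
    using cpos qnn i S by (intro sum_nonneg) auto
  have c2: "(\<Sum>k\<in>M - S. w k (\<Sum>l\<in>N. q l k) * q i k) \<ge> 0"
  proof (intro sum_nonneg)
    fix k assume k: "k \<in> M - S"
    have "0 \<le> (\<Sum>l\<in>N. q l k)" using qnn k by (intro sum_nonneg) auto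
    hence "w k (\<Sum>l\<in>N. q l k) > 0" using sit k unfolding mrs_situation_def by auto
    thus "0 \<le> w k (\<Sum>l\<in>N. q l k) * q i k" using qnn i k by auto
  qed
  show "profit N M S c w p q i \<le> p i 0 * qs i"
    unfolding profit_def Let_def using rev c1 c2 unfolding x_def X_def by linarith
qed

lemma single_le_all:
  assumes sit: "mrs_situation N M c w p qs qbar"
    and j: "j \<in> M" and q: "q \<in> orders N M qs qbar"
  shows "(\<Sum>i\<in>N. profit N M {j} c w p q i) \<le> (\<Sum>i\<in>N. profit N M M c w p q i)"
proof -
  have fin: "finite N" "finite M" using sit unfolding mrs_situation_def by auto
  have qnn: "\<forall>l\<in>N. \<forall>k\<in>M. 0 \<le> q l k" using q unfolding orders_def by auto
  define X where "X = (\<Sum>k\<in>M. \<Sum>l\<in>N. q l k)"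
  have qN0: "0 \<le> (\<Sum>l\<in>N. q l k)" if "k \<in> M" for k using qnn that by (intro sum_nonneg) auto
  have qNX: "(\<Sum>l\<in>N. q l k) \<le> X" if "k \<in> M" for k
    unfolding X_def using fin that qN0 by (intro sum_nonneg_le) auto
  have cdec: "c k X \<le> c k (\<Sum>l\<in>N. q l k)" if k: "k \<in> M" for k
  proof (cases "(\<Sum>l\<in>N. q l k) = X")
    case True thus ?thesis by simp
  next
    case False
    hence "(\<Sum>l\<in>N. q l k) < X" using qNX[OF k] by auto
    moreover have "\<forall>x y. 0 \<le> x \<longrightarrow> x < y \<longrightarrow> c k y < c k x"
      using sit k unfolding mrs_situation_def by blast
    ultimately show ?thesis using qN0[OF k] by (meson less_imp_le)
  qed
  have key: "cS c M X * q i k \<le>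
     (if k = j then c j (\<Sum>l\<in>N. q l j) * q i j else w k (\<Sum>l\<in>N. q l k) * q i k)"
    if i: "i \<in> N" and k: "k \<in> M" for i k
  proof -
    have "cS c M X \<le> c k X" using cS_le[OF fin(2) k] .
    also have "\<dots> \<le> c k (\<Sum>l\<in>N. q l k)" using cdec[OF k] .
    finally have a: "cS c M X \<le> c k (\<Sum>l\<in>N. q l k)" .
    have "c k (\<Sum>l\<in>N. q l k) < w k (\<Sum>l\<in>N. q l k)"
      using sit k qN0[OF k] unfolding mrs_situation_def by auto
    with a have b: "cS c M X \<le> w k (\<Sum>l\<in>N. q l k)" by simp
    have q0: "0 \<le> q i k" using qnn i k by auto
    show ?thesis using a b q0 by (auto intro: mult_right_mono)
  qed
  have "(\<Sum>i\<in>N. \<Sum>k\<in>M. cS c M X * q i k) \<le>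
     (\<Sum>i\<in>N. \<Sum>k\<in>M. (if k = j then c j (\<Sum>l\<in>N. q l j) * q i j else w k (\<Sum>l\<in>N. q l k) * q i k))"
    using key by (intro sum_mono) auto
  also have "\<dots> = (\<Sum>i\<in>N. c j (\<Sum>l\<in>N. q l j) * q i j + (\<Sum>k\<in>M-{j}. w k (\<Sum>l\<in>N. q l k) * q i k))"
  proof (intro sum.cong refl)
    fix i
    show "(\<Sum>k\<in>M. (if k = j then c j (\<Sum>l\<in>N. q l j) * q i j else w k (\<Sum>l\<in>N. q l k) * q i k)) =
       c j (\<Sum>l\<in>N. q l j) * q i j + (\<Sum>k\<in>M-{j}. w k (\<Sum>l\<in>N. q l k) * q i k)"
    proof (subst sum.remove[OF fin(2) j])
      have "(\<Sum>k\<in>M-{j}. (if k = j then c j (\<Sum>l\<in>N. q l j) * q i j else w k (\<Sum>l\<in>N. q l k) * q i k))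
          = (\<Sum>k\<in>M-{j}. w k (\<Sum>l\<in>N. q l k) * q i k)" by (rule sum.cong) auto
      thus "(if j = j then c j (\<Sum>l\<in>N. q l j) * q i j else w j (\<Sum>l\<in>N. q l j) * q i j) +
          (\<Sum>k\<in>M-{j}. (if k = j then c j (\<Sum>l\<in>N. q l j) * q i j else w k (\<Sum>l\<in>N. q l k) * q i k)) =
          c j (\<Sum>l\<in>N. q l j) * q i j + (\<Sum>k\<in>M-{j}. w k (\<Sum>l\<in>N. q l k) * q i k)" by simp
    qed
  qed
  also have "\<dots> = (\<Sum>i\<in>N. c j (\<Sum>l\<in>N. q l j) * q i j) + (\<Sum>i\<in>N. \<Sum>k\<in>M-{j}. w k (\<Sum>l\<in>N. q l k) * q i k)"
    by (simp add: sum.distrib)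
  finally have "(\<Sum>i\<in>N. \<Sum>k\<in>M. cS c M X * q i k) \<le> \<dots>" .
  thus ?thesis unfolding F_single[OF fin j] F_all[OF fin] X_def by linarith
qed

lemma move_orders:
  assumes sit: "mrs_situation N M c w p qs qbar" and ub: "unbounded_production N M qs qbar"
    and j: "j \<in> M" and q: "q \<in> orders N M qs qbar"
  shows "(\<lambda>i k. if i \<in> N \<and> k = j then (\<Sum>l\<in>M. q i l) else 0) \<in> orders N M qs qbar"
proof -
  have fin: "finite N" "finite M" using sit unfolding mrs_situation_def by auto
  obtain K where K: "\<forall>i\<in>N. \<forall>j\<in>M. qbar i j = K" "\<forall>i\<in>N. qs i \<le> K"
    using ub unfolding unbounded_production_def by blast
  have qnn: "\<forall>l\<in>N. \<forall>k\<in>M. 0 \<le> q l k" and qle: "\<forall>i\<in>N. (\<Sum>k\<in>M. q i k) \<le> qs i"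
    using q unfolding orders_def by auto
  have s0: "0 \<le> (\<Sum>l\<in>M. q i l)" if "i \<in> N" for i using qnn that by (intro sum_nonneg) auto
  have sums: "(\<Sum>k\<in>M. (if i \<in> N \<and> k = j then (\<Sum>l\<in>M. q i l) else 0)) = (if i \<in> N then (\<Sum>l\<in>M. q i l) else 0)" for i
    using fin j by (simp add: sum.delta)
  have qK: "\<forall>i\<in>N. (\<Sum>l\<in>M. q i l) \<le> K" using qle K by force
  have K0: "\<forall>i\<in>N. 0 \<le> K" using qK s0 by force
  show ?thesis unfolding orders_def using j s0 K qle qK K0 fin by (auto simp: sum.delta)
qed

lemma move_value:
  assumes sit: "mrs_situation N M c w p qs qbar"
    and j: "j \<in> M" and q: "q \<in> orders N M qs qbar"
    and cj: "cS c M (\<Sum>k\<in>M. \<Sum>l\<in>N. q l k) = c j (\<Sum>k\<in>M. \<Sum>l\<in>N. q l k)"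
  shows "(\<Sum>i\<in>N. profit N M M c w p q i) =
    (\<Sum>i\<in>N. profit N M {j} c w p (\<lambda>i k. if i \<in> N \<and> k = j then (\<Sum>l\<in>M. q i l) else 0) i)"
proof -
  have fin: "finite N" "finite M" using sit unfolding mrs_situation_def by auto
  define X where "X = (\<Sum>k\<in>M. \<Sum>l\<in>N. q l k)"
  define q' where "q' = (\<lambda>i k. if i \<in> N \<and> k = j then (\<Sum>l\<in>M. q i l) else 0)"
  have s1: "(\<Sum>k\<in>M. q' i k) = (\<Sum>l\<in>M. q i l)" if "i \<in> N" for i
    unfolding q'_def using fin j that by (simp add: sum.delta)
  have s2: "(\<Sum>l\<in>N. q' l j) = X"
    unfolding q'_def X_def by (simp add: sum.swap[of _ N M])
  have s3: "(\<Sum>k\<in>M-{j}. w k (\<Sum>l\<in>N. q' l k) * q' i k) = 0" for i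
    unfolding q'_def by (intro sum.neutral) auto
  have s4: "q' i j = (\<Sum>l\<in>M. q i l)" if "i \<in> N" for i unfolding q'_def using that by simp
  have A: "(\<Sum>i\<in>N. profit N M {j} c w p q' i) =
     (\<Sum>i\<in>N. p i (\<Sum>k\<in>M. q i k) * (\<Sum>k\<in>M. q i k)) - (\<Sum>i\<in>N. c j X * (\<Sum>l\<in>M. q i l))"
    unfolding F_single[OF fin j] s2 s3 by (simp add: s1 s4 cong: sum.cong)
  have B: "(\<Sum>i\<in>N. profit N M M c w p q i) =
     (\<Sum>i\<in>N. p i (\<Sum>k\<in>M. q i k) * (\<Sum>k\<in>M. q i k)) - (\<Sum>i\<in>N. c j X * (\<Sum>l\<in>M. q i l))"
    unfolding F_all[OF fin] using cj unfolding X_def[symmetric] by (simp add: sum_distrib_left)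
  show ?thesis using A B unfolding q'_def by simp
qed

theorem lemma3:
  fixes N :: "'n set" and M :: "'m set"
    and c w :: "'m \<Rightarrow> real \<Rightarrow> real" and p :: "'n \<Rightarrow> real \<Rightarrow> real"
    and qs :: "'n \<Rightarrow> real" and qbar :: "'n \<Rightarrow> 'm \<Rightarrow> real"
  assumes "mrs_situation N M c w p qs qbar"
    and "unbounded_production N M qs qbar"
    and "M \<noteq> {}"
  shows "card (optimal_suppliers N M c w p qs qbar) \<ge> 1"
proof -
  note sit = assms(1) and ub = assms(2) and Mne = assms(3)
  have fin: "finite N" "finite M" using sit unfolding mrs_situation_def by auto
  define A where "A = orders N M qs qbar"
  define F where "F = (\<lambda>S q. \<Sum>i\<in>N. profit N M S c w p q i)"
  define v where "v = mrs_game M c w p qs qbar"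
  have ex: "\<exists>j\<in>M. v N M = v N {j}"
  proof (cases "N = {}")
    case True
    thus ?thesis using Mne unfolding v_def mrs_game_def by auto
  next
    case False
    have vS: "v N S = (SUP q\<in>A. F S q)" for S
      unfolding v_def mrs_game_def A_def F_def using False by simp
    have A0: "(\<lambda>i k. 0) \<in> A"
      using sit unfolding A_def orders_def mrs_situation_def by (auto simp: less_imp_le)
    hence Ane: "A \<noteq> {}" by auto
    have bdd: "bdd_above (F S ` A)" if "S \<subseteq> M" "S \<noteq> {}" for S
      unfolding bdd_above_def F_def A_def using bounded_F[OF sit Mne that] by blast
    have bddM: "bdd_above (F M ` A)" using bdd[of M] Mne by simp
    have bddj: "bdd_above (F {j} ` A)" if "j \<in> M" for j using bdd[of "{j}"] that by simp
    have le1: "v N {j} \<le> v N M" if j: "j \<in> M" for j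
      unfolding vS
    proof (rule cSUP_mono[OF Ane bddM])
      fix q assume "q \<in> A"
      thus "\<exists>m\<in>A. F {j} q \<le> F M m"
        using single_le_all[OF sit j] unfolding A_def F_def by blast
    qed
    define mx where "mx = Max ((\<lambda>j. v N {j}) ` M)"
    have le2: "v N M \<le> mx" unfolding vS
    proof (rule cSUP_least[OF Ane])
      fix q assume q: "q \<in> A"
      obtain j where j: "j \<in> M"
        "cS c M (\<Sum>k\<in>M. \<Sum>l\<in>N. q l k) = c j (\<Sum>k\<in>M. \<Sum>l\<in>N. q l k)"
        using cS_in[OF fin(2) Mne] by blast
      let ?q' = "(\<lambda>i k. if i \<in> N \<and> k = j then (\<Sum>l\<in>M. q i l) else 0)"
      have q': "?q' \<in> A" using move_orders[OF sit ub j(1)] q unfolding A_def by blast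
      have "F M q = F {j} ?q'" using move_value[OF sit j(1) _ j(2)] q unfolding F_def A_def by blast
      also have "\<dots> \<le> (SUP q\<in>A. F {j} q)" by (rule cSUP_upper[OF q' bddj[OF j(1)]])
      also have "\<dots> = v N {j}" using vS by simp
      also have "\<dots> \<le> mx" unfolding mx_def using fin j(1) by (intro Max_ge) auto
      finally show "F M q \<le> mx" .
    qed
    have "mx \<in> (\<lambda>j. v N {j}) ` M" unfolding mx_def using fin Mne by (intro Max_in) auto
    then obtain j where j: "j \<in> M" "mx = v N {j}" by blast
    thus ?thesis using le1[OF j(1)] le2 by force
  qed
  then obtain j where j: "j \<in> M" "v N M = v N {j}" by blast
  have "j \<in> optimal_suppliers N M c w p qs qbar"
    using j unfolding optimal_suppliers_def v_def by simp
  moreover have "finite (optimal_suppliers N M c w p qs qbar)"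
    using fin unfolding optimal_suppliers_def by simp
  ultimately have "card (optimal_suppliers N M c w p qs qbar) > 0"
    using card_gt_0_iff by blast
  thus ?thesis by simp
qed

end
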